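(* Let $W$ be the Weyl group of a simply laced spherical Coxeter diagram, let $r$ be a reflection in $W$ with positive root $\delta_r$, and let $\beta,\gamma$ be two mutually orthogonal positive roots both moved by $r$, i.e. $(\beta,\delta_r)\neq0$ and $(\gamma,\delta_r)\ne0$. Then there exists a reflection $s\in W$ commuting with $r$ such that $\{\beta\}=rs\{\gamma\}$.
   Context: Roots are normalized to have $(\alpha,\alpha)=2$. For a set $B$ of mutually orthogonal positive roots and $w\in W$, $wB=\Phi^+\cap\{\pm w\beta:\beta\in B\}$, where $\Phi^+$ is the set of positive roots. *)

theory Defs
  imports "HOL-Analysis.Analysis"
begin

definition refl :: "'a::euclidean_space \<Rightarrow> 'a \<Rightarrow> 'a" where
  "refl a x = x - ((2 * (x \<bullet> a)) / (a \<bullet> a)) *\<^sub>R a"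

text \<open>These are exactly the
  root systems of simply laced spherical Coxeter diagrams (disjoint unions of ADE).\<close>
definition simply_laced_root_system :: "'a::euclidean_space set \<Rightarrow> bool" where
  "simply_laced_root_system \<Phi> \<longleftrightarrow>
     finite \<Phi> \<and>
     (\<forall>\<alpha>\<in>\<Phi>. \<alpha> \<bullet> \<alpha> = 2) \<and>
     (\<forall>\<alpha>\<in>\<Phi>. \<forall>\<beta>\<in>\<Phi>. \<alpha> \<bullet> \<beta> \<in> \<int>) \<and>
     (\<forall>\<alpha>\<in>\<Phi>. \<forall>\<beta>\<in>\<Phi>. refl \<alpha> \<beta> \<in> \<Phi>)"

inductive_set weyl_group :: "'a::euclidean_space set \<Rightarrow> ('a \<Rightarrow> 'a) set"
  for \<Phi> :: "'a set" where
  weyl_id: "id \<in> weyl_group \<Phi>"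
| weyl_step: "w \<in> weyl_group \<Phi> \<Longrightarrow> \<alpha> \<in> \<Phi> \<Longrightarrow> refl \<alpha> \<circ> w \<in> weyl_group \<Phi>"

text \<open>Positive roots with respect to a generic vector v (no root orthogonal to v);
  every positive system of a finite root system arises in this way.\<close>
definition positive_roots :: "'a::euclidean_space set \<Rightarrow> 'a \<Rightarrow> 'a set" where
  "positive_roots \<Phi> v = {\<alpha> \<in> \<Phi>. 0 < v \<bullet> \<alpha>}"

definition weyl_act :: "'a::euclidean_space set \<Rightarrow> 'a \<Rightarrow> ('a \<Rightarrow> 'a) \<Rightarrow> 'a set \<Rightarrow> 'a set" where
  "weyl_act \<Phi> v w B = positive_roots \<Phi> v \<inter> {x. \<exists>\<beta>\<in>B. x = w \<beta> \<or> x = - w \<beta>}"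

end

theory Submission
  imports Defs
begin

lemma refl_comm:
  fixes a b :: "'a::euclidean_space"
  assumes "a \<bullet> b = 0"
  shows "refl a \<circ> refl b = refl b \<circ> refl a"
proof
  fix x
  have ba: "b \<bullet> a = 0" using assms by (simp add: inner_commute)
  show "(refl a \<circ> refl b) x = (refl b \<circ> refl a) x"
    using assms ba by (simp add: refl_def inner_diff_left inner_scaleR_left algebra_simps)
qed

lemma root_inner:
  fixes a b :: "'a::euclidean_space"
  assumes aa: "a \<bullet> a = 2" and bb: "b \<bullet> b = 2" and ab: "a \<bullet> b \<in> \<int>"
    and ne: "a \<noteq> b" "a \<noteq> - b" and nz: "a \<bullet> b \<noteq> 0"
  shows "a \<bullet> b = 1 \<or> a \<bullet> b = -1"
proof -
  obtain k where k: "a \<bullet> b = of_int k" using ab by (auto elim: Ints_cases)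
  have "\<bar>a \<bullet> b\<bar> \<le> norm a * norm b" by (rule Cauchy_Schwarz_ineq2)
  also have "norm a * norm b = sqrt (a \<bullet> a) * sqrt (b \<bullet> b)" by (simp add: norm_eq_sqrt_inner)
  also have "\<dots> = 2" using aa bb by simp
  finally have le: "\<bar>a \<bullet> b\<bar> \<le> 2" .
  have "(a - b) \<bullet> (a - b) = 4 - 2 * (a \<bullet> b)" using aa bb
    by (simp add: inner_diff_left inner_diff_right inner_commute)
  moreover have "(a - b) \<bullet> (a - b) \<noteq> 0" using ne by simp
  ultimately have n2: "a \<bullet> b \<noteq> 2" by auto
  have "(a + b) \<bullet> (a + b) = 4 + 2 * (a \<bullet> b)" using aa bb
    by (simp add: inner_add_left inner_add_right inner_commute)
  moreover have "(a + b) \<bullet> (a + b) \<noteq> 0" using ne(2) by (metis eq_neg_iff_add_eq_0 inner_eq_zero_iff)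
  ultimately have n3: "a \<bullet> b \<noteq> -2" by auto
  have "\<bar>k\<bar> \<le> 2" "k \<noteq> 2" "k \<noteq> -2" "k \<noteq> 0" using le n2 n3 nz k by auto
  then have "k = 1 \<or> k = -1" by auto
  then show ?thesis using k by auto
qed

theorem lemma2p3:
  fixes \<Phi> :: "'a::euclidean_space set" and v \<delta> \<beta> \<gamma> :: 'a
  assumes "simply_laced_root_system \<Phi>"
    and "\<forall>\<alpha>\<in>\<Phi>. v \<bullet> \<alpha> \<noteq> 0"
    and "\<delta> \<in> positive_roots \<Phi> v"
    and "\<beta> \<in> positive_roots \<Phi> v" and "\<gamma> \<in> positive_roots \<Phi> v"
    and "\<beta> \<bullet> \<gamma> = 0"
    and "\<beta> \<bullet> \<delta> \<noteq> 0" and "\<gamma> \<bullet> \<delta> \<noteq> 0"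
  shows "\<exists>s. s \<in> weyl_group \<Phi> \<and> (\<exists>\<alpha>\<in>positive_roots \<Phi> v. s = refl \<alpha>) \<and>
             refl \<delta> \<circ> s = s \<circ> refl \<delta> \<and>
             {\<beta>} = weyl_act \<Phi> v (refl \<delta> \<circ> s) {\<gamma>}"
proof -
  note R = assms(1)[unfolded simply_laced_root_system_def]
  have dP: "\<delta> \<in> \<Phi>" "0 < v \<bullet> \<delta>" using assms(3) by (auto simp: positive_roots_def)
  have bP: "\<beta> \<in> \<Phi>" "0 < v \<bullet> \<beta>" using assms(4) by (auto simp: positive_roots_def)
  have gP: "\<gamma> \<in> \<Phi>" "0 < v \<bullet> \<gamma>" using assms(5) by (auto simp: positive_roots_def)
  have dd: "\<delta> \<bullet> \<delta> = 2" and bb: "\<beta> \<bullet> \<beta> = 2" and gg: "\<gamma> \<bullet> \<gamma> = 2"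
    using R dP bP gP by auto
  have gb: "\<gamma> \<bullet> \<beta> = 0" using assms(6) by (simp add: inner_commute)
  have "\<beta> \<noteq> \<delta>" using assms(8) gb by auto
  moreover have "\<beta> \<noteq> - \<delta>" using assms(8) gb by auto
  ultimately have b1: "\<beta> \<bullet> \<delta> = 1 \<or> \<beta> \<bullet> \<delta> = -1"
    using root_inner[OF bb dd] R bP dP assms(7) by auto
  have "\<gamma> \<noteq> \<delta>" using assms(6,7) by auto
  moreover have "\<gamma> \<noteq> - \<delta>" using assms(6,7) by auto
  ultimately have c1: "\<gamma> \<bullet> \<delta> = 1 \<or> \<gamma> \<bullet> \<delta> = -1"
    using root_inner[OF gg dd] R gP dP assms(8) by auto
  define b where "b = \<beta> \<bullet> \<delta>"
  define c where "c = \<gamma> \<bullet> \<delta>"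
  have bsq: "b * b = 1" and csq: "c * c = 1" using b1 c1 b_def c_def by auto
  have rdb: "refl \<delta> \<beta> = \<beta> - b *\<^sub>R \<delta>" using dd by (simp add: refl_def b_def)
  have rdbP: "refl \<delta> \<beta> \<in> \<Phi>" using R bP dP by auto
  have negcl: "\<And>y. y \<in> \<Phi> \<Longrightarrow> - y \<in> \<Phi>"
  proof -
    fix y assume y: "y \<in> \<Phi>"
    have "refl y y = - y" using R y by (simp add: refl_def scaleR_2 algebra_simps)
    then show "- y \<in> \<Phi>" using R y by metis
  qed
  define x where "x = (- (b * c)) *\<^sub>R (\<beta> - b *\<^sub>R \<delta>)"
  have "x = refl \<delta> \<beta> \<or> x = - refl \<delta> \<beta>"
    using b1 c1 rdb unfolding x_def b_def c_def by auto
  then have xP: "x \<in> \<Phi>" using rdbP negcl by auto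
  have gx: "\<gamma> \<bullet> x = 1"
    unfolding x_def using gb bsq csq
    by (simp add: inner_diff_right c_def[symmetric] algebra_simps)
  have xd: "x \<bullet> \<delta> = c"
    unfolding x_def using dd bsq
    by (simp add: inner_diff_left b_def[symmetric] algebra_simps)
  define \<alpha> where "\<alpha> = \<gamma> - x"
  have xx: "x \<bullet> x = 2" using R xP by auto
  have aP: "\<alpha> \<in> \<Phi>"
  proof -
    have "refl x \<gamma> = \<alpha>" using gx xx by (simp add: refl_def \<alpha>_def)
    then show ?thesis using R xP gP by metis
  qed
  have ad: "\<alpha> \<bullet> \<delta> = 0" using xd by (simp add: \<alpha>_def inner_diff_left c_def)
  have aa: "\<alpha> \<bullet> \<alpha> = 2" using R aP by auto
  have ga: "\<gamma> \<bullet> \<alpha> = 1" using gg gx by (simp add: \<alpha>_def inner_diff_right)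
  have sg: "refl \<alpha> \<gamma> = x" using aa ga by (simp add: refl_def \<alpha>_def)
  obtain \<alpha>' where a'P: "\<alpha>' \<in> positive_roots \<Phi> v" and a'eq: "refl \<alpha>' = refl \<alpha>"
  proof (cases "0 < v \<bullet> \<alpha>")
    case True
    then show ?thesis using that aP by (auto simp: positive_roots_def)
  next
    case False
    then have "0 < v \<bullet> (- \<alpha>)" using assms(2) aP by force
    moreover have "refl (- \<alpha>) = refl \<alpha>" by (auto simp: refl_def)
    moreover have "- \<alpha> \<in> positive_roots \<Phi> v" using calculation(1) negcl aP by (simp add: positive_roots_def)
    ultimately show ?thesis using that by blast
  qed
  have a'\<Phi>: "\<alpha>' \<in> \<Phi>" using a'P by (simp add: positive_roots_def)
  have W: "refl \<alpha>' \<in> weyl_group \<Phi>"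
    using weyl_group.weyl_step[OF weyl_group.weyl_id a'\<Phi>] by simp
  have comm: "refl \<delta> \<circ> refl \<alpha> = refl \<alpha> \<circ> refl \<delta>"
    by (rule refl_comm) (simp add: ad inner_commute)
  have rdx: "refl \<delta> x = (- (b * c)) *\<^sub>R \<beta>"
  proof -
    have "refl \<delta> x = x - c *\<^sub>R \<delta>" using dd xd by (simp add: refl_def)
    also have "\<dots> = (- (b * c)) *\<^sub>R \<beta> + (b * b * c - c) *\<^sub>R \<delta>"
      by (simp add: x_def algebra_simps)
    also have "\<dots> = (- (b * c)) *\<^sub>R \<beta>" using bsq by simp
    finally show ?thesis .
  qed
  have img: "(refl \<delta> \<circ> refl \<alpha>) \<gamma> = \<beta> \<or> (refl \<delta> \<circ> refl \<alpha>) \<gamma> = - \<beta>"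
    using rdx sg b1 c1 unfolding b_def c_def by auto
  have negb: "\<not> 0 < v \<bullet> (- \<beta>)" using bP by simp
  have "{\<beta>} = weyl_act \<Phi> v (refl \<delta> \<circ> refl \<alpha>) {\<gamma>}"
    using img bP negb negcl by (auto simp: weyl_act_def positive_roots_def)
  then show ?thesis using W a'P a'eq comm by metis
qed

end
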